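(* Let $\zeta\in M^0$. If $u_k,u\in\mathrm{Conv}_{\mathrm{coe}}(\mathbb{R}^n)$ are such that $\delta^H_\zeta(u_k,u)\to 0$, then $u_k$ epi-converges to $u$ as $k\to\infty$.
   Context: $M^0$ is the set of continuous, strictly decreasing $\zeta:\mathbb{R}\to(0,\infty)$ with $\int_0^\infty\zeta(t)dt<\infty$. $\mathrm{Conv}_{\mathrm{coe}}(\mathbb{R}^n)$ is the set of proper, lower semicontinuous, convex, coercive functions $u:\mathbb{R}^n\to\mathbb{R}\cup\{+\infty\}$. With $\mathcal{K}^n$ the non-empty compact convex sets and $d_H$ the Hausdorff metric, define $\hat d_H$ on $\mathcal{K}^n\cup\{\emptyset\}$ by $\hat d_H(K,L)=d_H(K,L)$ if both non-empty, $\hat d_H(\emptyset,\emptyset)=0$, and $\hat d_H(K,\emptyset)=\hat d_H(\emptyset,K)=\max\{1,d_H(K,\{0\})\}$ for $K\ne\emptyset$. Then $\delta^H_\zeta(u,v)=\int_0^{\infty}\hat d_H(\{\zeta\circ u\ge s\},\{\zeta\circ v\ge s\})\,ds$, where $\{\zeta\circ u\ge s\}=\{x:\zeta(u(x))\ge s\}$ and $\zeta(+\infty):=0$. Epi-convergence $u_k\to u$: for every $x$, $\liminf_k u_k(x_k)\ge u(x)$ for all $x_k\to x$ and $\limsup_k u_k(x_k)\le u(x)$ for some $x_k\to x$. *)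

theory Defs
  imports "HOL-Analysis.Analysis" "HOL-Library.Extended_Real"
begin

definition M0 :: "(real \<Rightarrow> real) set" where
  "M0 = {\<zeta>. continuous_on UNIV \<zeta> \<and> (\<forall>s t. s < t \<longrightarrow> \<zeta> t < \<zeta> s) \<and>
              (\<forall>t. 0 < \<zeta> t) \<and> set_integrable lborel {0..} \<zeta>}"

text \<open>Extension of zeta to extended reals with zeta(+inf) = 0 (values -inf never occur
  for proper functions).\<close>
definition zeta_ext :: "(real \<Rightarrow> real) \<Rightarrow> ereal \<Rightarrow> real" where
  "zeta_ext \<zeta> v = (case v of ereal r \<Rightarrow> \<zeta> r | PInfty \<Rightarrow> 0 | MInfty \<Rightarrow> 0)"

definition conv_coe :: "('a::euclidean_space \<Rightarrow> ereal) set" where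
  "conv_coe = {u. (\<forall>x. u x \<noteq> -\<infinity>) \<and> (\<exists>x. u x \<noteq> \<infinity>)
      \<and> closed {(x, r::real). u x \<le> ereal r}
      \<and> (\<forall>x y t. 0 \<le> t \<and> t \<le> 1 \<longrightarrow>
            u ((1 - t) *\<^sub>R x + t *\<^sub>R y) \<le> ereal (1 - t) * u x + ereal t * u y)
      \<and> (u \<longlongrightarrow> \<infinity>) at_infinity}"

definition haus_dist :: "'a::metric_space set \<Rightarrow> 'a set \<Rightarrow> real" where
  "haus_dist K L = max (SUP x\<in>K. infdist x L) (SUP y\<in>L. infdist y K)"

definition haus_dist_hat :: "'a::real_normed_vector set \<Rightarrow> 'a set \<Rightarrow> real" where
  "haus_dist_hat K L =
     (if K = {} \<and> L = {} then 0
      else if L = {} then max 1 (haus_dist K {0})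
      else if K = {} then max 1 (haus_dist L {0})
      else haus_dist K L)"

definition superlevel :: "(real \<Rightarrow> real) \<Rightarrow> ('a \<Rightarrow> ereal) \<Rightarrow> real \<Rightarrow> 'a set" where
  "superlevel \<zeta> u s = {x. zeta_ext \<zeta> (u x) \<ge> s}"

definition delta_H :: "(real \<Rightarrow> real) \<Rightarrow> ('a::real_normed_vector \<Rightarrow> ereal) \<Rightarrow> ('a \<Rightarrow> ereal) \<Rightarrow> ennreal" where
  "delta_H \<zeta> u v = (\<integral>\<^sup>+ s\<in>{0..}. ennreal (haus_dist_hat (superlevel \<zeta> u s) (superlevel \<zeta> v s)) \<partial>lborel)"

definition epi_converges :: "(nat \<Rightarrow> 'a::metric_space \<Rightarrow> ereal) \<Rightarrow> ('a \<Rightarrow> ereal) \<Rightarrow> bool" where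
  "epi_converges uk u \<longleftrightarrow>
     (\<forall>x. (\<forall>xk. xk \<longlonglongrightarrow> x \<longrightarrow> liminf (\<lambda>k. uk k (xk k)) \<ge> u x) \<and>
          (\<exists>xk. xk \<longlonglongrightarrow> x \<and> limsup (\<lambda>k. uk k (xk k)) \<le> u x))"

end

theory Submission
  imports Defs
begin

lemma diag:
  fixes Q :: "nat \<Rightarrow> real \<Rightarrow> 'a \<Rightarrow> bool"
  assumes ev: "\<And>e. e > 0 \<Longrightarrow> eventually (\<lambda>k. \<exists>y. Q k e y) sequentially"
    and mono: "\<And>k e e' y. Q k e y \<Longrightarrow> e \<le> e' \<Longrightarrow> Q k e' y"
  shows "\<exists>yk. \<forall>e>0. eventually (\<lambda>k. Q k e (yk k)) sequentially"
proof -
  have "\<forall>m. \<exists>N. \<forall>k\<ge>N. \<exists>y. Q k (1 / real (Suc m)) y"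
    using ev[of "1 / real (Suc _)"] by (simp add: eventually_sequentially)
  then obtain N where N: "\<And>m k. k \<ge> N m \<Longrightarrow> \<exists>y. Q k (1 / real (Suc m)) y" by metis
  define mk where "mk k = (GREATEST m. m \<le> k \<and> N m \<le> k)" for k
  define yk where "yk k = (SOME y. Q k (1 / real (Suc (mk k))) y)" for k
  have "eventually (\<lambda>k. Q k e (yk k)) sequentially" if epos: "e > 0" for e
  proof -
    obtain j where j: "1 / real (Suc j) < e"
      using nat_approx_posE[OF epos] by blast
    have "Q k e (yk k)" if k: "k \<ge> max j (N j)" for k
    proof -
      have P: "j \<le> k \<and> N j \<le> k" using k by simp
      have g1: "mk k \<le> k \<and> N (mk k) \<le> k" unfolding mk_def
        by (rule GreatestI_nat[where P="\<lambda>m. m \<le> k \<and> N m \<le> k", OF P]) auto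
      have g2: "j \<le> mk k" unfolding mk_def
        by (rule Greatest_le_nat[where P="\<lambda>m. m \<le> k \<and> N m \<le> k", OF P]) auto
      have "\<exists>y. Q k (1 / real (Suc (mk k))) y" using N g1 by blast
      then have q: "Q k (1 / real (Suc (mk k))) (yk k)" unfolding yk_def by (rule someI_ex)
      have "1 / real (Suc (mk k)) \<le> 1 / real (Suc j)"
        using g2 by (simp add: frac_le)
      then show ?thesis using mono[OF q] j by simp
    qed
    then show ?thesis unfolding eventually_sequentially by (intro exI[of _ "max j (N j)"]) simp
  qed
  then show ?thesis by blast
qed

lemma delta_lower:
  fixes u v :: "'a::real_normed_vector \<Rightarrow> ereal"
  assumes "0 \<le> p" "p < q" "0 \<le> c"
    and "\<And>s. p < s \<Longrightarrow> s < q \<Longrightarrow> c \<le> haus_dist_hat (superlevel \<zeta> u s) (superlevel \<zeta> v s)"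
  shows "ennreal (c * (q - p)) \<le> delta_H \<zeta> u v"
proof -
  have "ennreal (c * (q - p)) = (\<integral>\<^sup>+ s. ennreal c * indicator {p<..<q} s \<partial>lborel)"
    using assms by (simp add: nn_integral_cmult_indicator ennreal_mult)
  also have "\<dots> \<le> delta_H \<zeta> u v"
    unfolding delta_H_def
  proof (rule nn_integral_mono)
    fix s
    show "ennreal c * indicator {p<..<q} s \<le> ennreal (haus_dist_hat (superlevel \<zeta> u s) (superlevel \<zeta> v s)) * indicator {0..} s"
      using assms(1) assms(4)[of s] by (auto simp: indicator_def intro: ennreal_leI)
  qed
  finally show ?thesis .
qed

lemma hd_ge1:
  fixes K L :: "'a::real_normed_vector set"
  assumes "(K = {}) \<noteq> (L = {})"
  shows "1 \<le> haus_dist_hat K L"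
  using assms unfolding haus_dist_hat_def by auto

lemma hd_left:
  fixes K L :: "'a::real_normed_vector set"
  assumes "K \<noteq> {}" "L \<noteq> {}" "bounded K" "y \<in> K"
  shows "infdist y L \<le> haus_dist_hat K L"
proof -
  obtain l where l: "l \<in> L" using assms by auto
  obtain B where B: "\<And>x. x \<in> K \<Longrightarrow> norm x \<le> B" using assms(3) by (meson bounded_iff)
  have "bdd_above ((\<lambda>x. infdist x L) ` K)"
  proof (rule bdd_aboveI2)
    fix x assume "x \<in> K"
    have "infdist x L \<le> dist x l" by (rule infdist_le[OF l])
    also have "\<dots> \<le> norm x + norm l" by (simp add: dist_norm norm_triangle_ineq4)
    finally show "infdist x L \<le> B + norm l" using B[OF \<open>x \<in> K\<close>] by simp
  qed
  then have "infdist y L \<le> (SUP x\<in>K. infdist x L)" using assms(4) by (rule cSUP_upper[rotated])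
  then show ?thesis using assms unfolding haus_dist_hat_def haus_dist_def by auto
qed

lemma hd_right:
  fixes K L :: "'a::real_normed_vector set"
  assumes "K \<noteq> {}" "L \<noteq> {}" "bounded L" "y \<in> L"
  shows "infdist y K \<le> haus_dist_hat K L"
proof -
  have "infdist y K \<le> haus_dist_hat L K" by (rule hd_left) (use assms in auto)
  moreover have "haus_dist_hat L K = haus_dist_hat K L"
    unfolding haus_dist_hat_def haus_dist_def using assms by auto
  ultimately show ?thesis by simp
qed

lemma superlevel_D:
  assumes "y \<in> superlevel \<zeta> v s" "s > 0"
  shows "\<exists>r. v y = ereal r \<and> s \<le> \<zeta> r"
  using assms unfolding superlevel_def zeta_ext_def by (cases "v y") auto

lemma superlevel_I:
  assumes "v y = ereal r" "s \<le> \<zeta> r"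
  shows "y \<in> superlevel \<zeta> v s"
  using assms unfolding superlevel_def zeta_ext_def by auto

lemma M0_mono: "\<zeta> \<in> M0 \<Longrightarrow> s < t \<Longrightarrow> \<zeta> t < \<zeta> s"
  and M0_pos: "\<zeta> \<in> M0 \<Longrightarrow> 0 < \<zeta> t"
  unfolding M0_def by auto

lemma M0_le_iff: assumes "\<zeta> \<in> M0" shows "\<zeta> t \<le> \<zeta> s \<longleftrightarrow> s \<le> t"
proof
  assume "\<zeta> t \<le> \<zeta> s" then show "s \<le> t" using M0_mono[OF assms, of t s] by linarith
next
  assume "s \<le> t" then show "\<zeta> t \<le> \<zeta> s" using M0_mono[OF assms, of s t] by (cases "s = t") auto
qed

lemma coe_bounded:
  fixes u :: "'a::euclidean_space \<Rightarrow> ereal"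
  assumes "u \<in> conv_coe"
  shows "bounded {y. u y \<le> ereal M}"
proof -
  have "(u \<longlongrightarrow> \<infinity>) at_infinity" using assms unfolding conv_coe_def by auto
  then have "eventually (\<lambda>y. ereal M < u y) at_infinity"
    by (simp add: order_tendstoD(1))
  then obtain b where b: "\<And>y. norm y \<ge> b \<Longrightarrow> ereal M < u y"
    unfolding eventually_at_infinity by auto
  have "{y. u y \<le> ereal M} \<subseteq> cball 0 b"
  proof
    fix y assume "y \<in> {y. u y \<le> ereal M}"
    then have "\<not> ereal M < u y" by simp
    then have "\<not> b \<le> norm y" using b by blast
    then show "y \<in> cball 0 b" by simp
  qed
  then show ?thesis using bounded_cball bounded_subset by blast
qed

lemma coe_closed:
  fixes u :: "'a::euclidean_space \<Rightarrow> ereal"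
  assumes "u \<in> conv_coe"
  shows "closed {y. u y \<le> ereal M}"
proof -
  have c: "closed {(x, r::real). u x \<le> ereal r}" using assms unfolding conv_coe_def by auto
  have eq: "{y. u y \<le> ereal M} = (\<lambda>y. (y, M)) -` {(x, r::real). u x \<le> ereal r}" by auto
  have "continuous_on UNIV (\<lambda>y::'a. (y, M))" by (intro continuous_intros)
  then have "closed ((\<lambda>y. (y, M)) -` {(x, r::real). u x \<le> ereal r})"
    by (rule closed_vimage[OF c])
  then show ?thesis unfolding eq .
qed


lemma liminf_part:
  fixes \<zeta> :: "real \<Rightarrow> real"
    and uk :: "nat \<Rightarrow> 'a::euclidean_space \<Rightarrow> ereal"
    and u :: "'a \<Rightarrow> ereal"
  assumes z: "\<zeta> \<in> M0"
    and ukc: "\<And>k. uk k \<in> conv_coe"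
    and uc: "u \<in> conv_coe"
    and lim: "(\<lambda>k. delta_H \<zeta> (uk k) u) \<longlonglongrightarrow> 0"
    and xk: "xk \<longlonglongrightarrow> x"
  shows "u x \<le> liminf (\<lambda>k. uk k (xk k))"
  unfolding le_Liminf_iff
proof (intro allI impI)
  fix y assume "y < u x"
  obtain t where t1: "y < ereal t" and t2: "ereal t < u x" using ereal_dense2[OF \<open>y < u x\<close>] by blast
  obtain t' where t'1: "ereal t < ereal t'" and t'2: "ereal t' < u x" using ereal_dense2[OF t2] by blast
  have tt: "t < t'" using t'1 by simp
  define C where "C = {z. u z \<le> ereal t'}"
  have Ccl: "closed C" unfolding C_def by (rule coe_closed[OF uc])
  have xC: "x \<notin> C" using t'2 unfolding C_def by simp
  define e where "e = (if C = {} then 1 else infdist x C)"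
  have epos: "e > 0" unfolding e_def using infdist_pos_not_in_closed[OF Ccl _ xC] by auto
  define c where "c = min 1 (e / 2)"
  have cpos: "c > 0" using epos unfolding c_def by simp
  define p where "p = \<zeta> t'"
  define q where "q = \<zeta> t"
  have pq: "0 < p" "p < q" unfolding p_def q_def using M0_pos[OF z] M0_mono[OF z tt] by auto
  show "eventually (\<lambda>k. y < uk k (xk k)) sequentially"
  proof (rule ccontr)
    assume "\<not> eventually (\<lambda>k. y < uk k (xk k)) sequentially"
    then have fr: "frequently (\<lambda>k. \<not> y < uk k (xk k)) sequentially"
      by (simp add: not_eventually)
    have ev1: "eventually (\<lambda>k. dist (xk k) x < e / 2) sequentially"
    proof -
      have "e / 2 > 0" using epos by simp
      then show ?thesis using xk unfolding tendsto_iff by blast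
    qed
    have ev2: "eventually (\<lambda>k. delta_H \<zeta> (uk k) u < ennreal (c * (q - p))) sequentially"
      using lim by (rule order_tendstoD(2)) (use cpos pq in \<open>simp\<close>)
    have "frequently (\<lambda>k. (dist (xk k) x < e / 2 \<and>
              delta_H \<zeta> (uk k) u < ennreal (c * (q - p))) \<and> \<not> y < uk k (xk k)) sequentially"
      by (rule frequently_eventually_conj[OF fr eventually_conj[OF ev1 ev2]])
    then obtain k where k1: "\<not> y < uk k (xk k)" and k2: "dist (xk k) x < e / 2"
        and k3: "delta_H \<zeta> (uk k) u < ennreal (c * (q - p))"
      by (auto dest: frequently_ex)
    have "uk k (xk k) \<noteq> -\<infinity>" using ukc[of k] unfolding conv_coe_def by auto
    moreover have "uk k (xk k) < ereal t" using k1 t1 by simp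
    ultimately obtain r where r: "uk k (xk k) = ereal r" "r < t"
      by (cases "uk k (xk k)") auto
    have qr: "q < \<zeta> r" unfolding q_def using M0_mono[OF z r(2)] .
    have "ennreal (c * (q - p)) \<le> delta_H \<zeta> (uk k) u"
    proof (rule delta_lower)
      show "0 \<le> p" "p < q" "0 \<le> c" using pq cpos by auto
      fix s assume s1: "p < s" and s2: "s < q"
      have spos: "s > 0" using s1 pq by simp
      define K where "K = superlevel \<zeta> (uk k) s"
      define L where "L = superlevel \<zeta> u s"
      have xkK: "xk k \<in> K" unfolding K_def using superlevel_I[where v="uk k" and y="xk k" and s=s and \<zeta>=\<zeta>, OF r(1)] qr s2 by simp
      have lev: "superlevel \<zeta> v s \<subseteq> {z. v z \<le> ereal t'}" for v :: "'a \<Rightarrow> ereal"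
      proof
        fix z assume zin: "z \<in> superlevel \<zeta> v s"
        obtain r' where r': "v z = ereal r'" "s \<le> \<zeta> r'" using superlevel_D[OF zin spos] by blast
        then have "\<zeta> t' < \<zeta> r'" using s1 p_def by simp
        then have "r' \<le> t'" using M0_le_iff[OF z, of t' r'] by linarith
        then show "z \<in> {z. v z \<le> ereal t'}" using r' by simp
      qed
      have Kb: "bounded K" unfolding K_def using lev coe_bounded[OF ukc[of k]] bounded_subset by blast
      have LC: "L \<subseteq> C" unfolding L_def C_def using lev by blast
      have "c \<le> haus_dist_hat K L"
      proof (cases "L = {}")
        case True
        then have "1 \<le> haus_dist_hat K L" using xkK by (intro hd_ge1) auto
        then show ?thesis unfolding c_def by linarith
      next
        case False
        then have Cne: "C \<noteq> {}" using LC by auto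
        have "e = infdist x C" unfolding e_def using Cne by simp
        also have "\<dots> \<le> infdist x L" by (rule infdist_mono[OF LC False])
        also have "\<dots> \<le> infdist (xk k) L + dist x (xk k)" by (rule infdist_triangle)
        finally have "e \<le> infdist (xk k) L + dist (xk k) x" by (simp add: dist_commute)
        moreover have "infdist (xk k) L \<le> haus_dist_hat K L"
          using xkK False Kb by (intro hd_left) auto
        ultimately show ?thesis using k2 unfolding c_def by linarith
      qed
      then show "c \<le> haus_dist_hat (superlevel \<zeta> (uk k) s) (superlevel \<zeta> u s)"
        unfolding K_def L_def .
    qed
    then show False using k3 by simp
  qed
qed


lemma limsup_part:
  fixes \<zeta> :: "real \<Rightarrow> real"
    and uk :: "nat \<Rightarrow> 'a::euclidean_space \<Rightarrow> ereal"
    and u :: "'a \<Rightarrow> ereal"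
  assumes z: "\<zeta> \<in> M0"
    and ukc: "\<And>k. uk k \<in> conv_coe"
    and uc: "u \<in> conv_coe"
    and lim: "(\<lambda>k. delta_H \<zeta> (uk k) u) \<longlonglongrightarrow> 0"
  shows "\<exists>xk. xk \<longlonglongrightarrow> x \<and> limsup (\<lambda>k. uk k (xk k)) \<le> u x"
proof (cases "u x = \<infinity>")
  case True
  then show ?thesis by (intro exI[of _ "\<lambda>_. x"]) simp
next
  case False
  moreover have "u x \<noteq> -\<infinity>" using uc unfolding conv_coe_def by auto
  ultimately obtain a where a: "u x = ereal a" by (cases "u x") auto
  have key: "eventually (\<lambda>k. \<exists>y. dist y x < \<epsilon> \<and> uk k y < ereal (a + \<epsilon>)) sequentially"
    if epos: "\<epsilon> > 0" for \<epsilon>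
  proof -
    define \<epsilon>' where "\<epsilon>' = min \<epsilon> 1"
    have e'pos: "\<epsilon>' > 0" "\<epsilon>' \<le> 1" "\<epsilon>' \<le> \<epsilon>" using epos unfolding \<epsilon>'_def by auto
    define p where "p = \<zeta> (a + \<epsilon>')"
    define q where "q = \<zeta> a"
    have pq: "0 < p" "p < q" unfolding p_def q_def using M0_pos[OF z] M0_mono[OF z, of a "a + \<epsilon>'"] e'pos by auto
    have ev: "eventually (\<lambda>k. delta_H \<zeta> (uk k) u < ennreal (\<epsilon>' * (q - p))) sequentially"
      using lim by (rule order_tendstoD(2)) (use e'pos pq in \<open>simp\<close>)
    show ?thesis
    proof (rule eventually_mono[OF ev])
      fix k assume k: "delta_H \<zeta> (uk k) u < ennreal (\<epsilon>' * (q - p))"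
      have "\<exists>s. p < s \<and> s < q \<and> haus_dist_hat (superlevel \<zeta> (uk k) s) (superlevel \<zeta> u s) < \<epsilon>'"
      proof (rule ccontr)
        assume na: "\<not> ?thesis"
        have "ennreal (\<epsilon>' * (q - p)) \<le> delta_H \<zeta> (uk k) u"
        proof (rule delta_lower)
          show "0 \<le> p" "p < q" "0 \<le> \<epsilon>'" using pq e'pos by auto
          fix s assume "p < s" "s < q"
          then show "\<epsilon>' \<le> haus_dist_hat (superlevel \<zeta> (uk k) s) (superlevel \<zeta> u s)"
            using na by (meson not_less)
        qed
        then show False using k by simp
      qed
      then obtain s where s1: "p < s" and s2: "s < q"
        and hd: "haus_dist_hat (superlevel \<zeta> (uk k) s) (superlevel \<zeta> u s) < \<epsilon>'" by blast
      have spos: "s > 0" using s1 pq by simp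
      define K where "K = superlevel \<zeta> (uk k) s"
      define L where "L = superlevel \<zeta> u s"
      have xL: "x \<in> L" unfolding L_def using superlevel_I[where v=u and y=x and s=s and \<zeta>=\<zeta>, OF a] s2 q_def by simp
      have lev: "\<exists>r'. v z = ereal r' \<and> r' < a + \<epsilon>'" if zin: "z \<in> superlevel \<zeta> v s" for v :: "'a \<Rightarrow> ereal" and z
      proof -
        obtain r' where r': "v z = ereal r'" "s \<le> \<zeta> r'" using superlevel_D[OF zin spos] by blast
        then have "\<zeta> (a + \<epsilon>') < \<zeta> r'" using s1 p_def by simp
        then have "r' < a + \<epsilon>'" using M0_le_iff[OF z, of r' "a + \<epsilon>'"] by linarith
        then show ?thesis using r' by blast
      qed
      have "L \<subseteq> {z. u z \<le> ereal (a + \<epsilon>')}" unfolding L_def using lev by fastforce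
      then have Lb: "bounded L" using coe_bounded[OF uc] bounded_subset by blast
      have Kne: "K \<noteq> {}"
      proof
        assume "K = {}"
        then have "1 \<le> haus_dist_hat K L" using xL by (intro hd_ge1) auto
        then show False using hd e'pos unfolding K_def L_def by linarith
      qed
      have "infdist x K \<le> haus_dist_hat K L" using Kne xL Lb by (intro hd_right) auto
      then have "infdist x K < \<epsilon>'" using hd unfolding K_def L_def by linarith
      then have "(INF y\<in>K. dist x y) < \<epsilon>'" using Kne by (simp add: infdist_notempty)
      then obtain y where yK: "y \<in> K" and dy: "dist x y < \<epsilon>'"
        using cInf_lessD[of "(\<lambda>y. dist x y) ` K" \<epsilon>'] Kne by auto
      obtain r' where r': "uk k y = ereal r'" "r' < a + \<epsilon>'" using lev yK unfolding K_def by blast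
      show "\<exists>y. dist y x < \<epsilon> \<and> uk k y < ereal (a + \<epsilon>)"
        using dy r' e'pos by (intro exI[of _ y]) (auto simp: dist_commute)
    qed
  qed
  have mono: "dist y x < e' \<and> uk k y < ereal (a + e')"
    if "dist y x < e \<and> uk k y < ereal (a + e)" "e \<le> e'" for k e e' y
  proof -
    have "ereal (a + e) \<le> ereal (a + e')" using that(2) by simp
    then show ?thesis using that by (meson less_le_trans)
  qed
  obtain yk where yk: "\<forall>e>0. eventually (\<lambda>k. dist (yk k) x < e \<and> uk k (yk k) < ereal (a + e)) sequentially"
  proof -
    have "\<exists>yk. \<forall>e>0. eventually (\<lambda>k. dist (yk k) x < e \<and> uk k (yk k) < ereal (a + e)) sequentially"
    proof (rule diag[where Q="\<lambda>k e y. dist y x < e \<and> uk k y < ereal (a + e)"])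
      fix e :: real assume "e > 0"
      then show "eventually (\<lambda>k. \<exists>y. dist y x < e \<and> uk k y < ereal (a + e)) sequentially"
        by (rule key)
    next
      fix k e e' y assume "dist y x < e \<and> uk k y < ereal (a + e)" "e \<le> (e'::real)"
      then show "dist y x < e' \<and> uk k y < ereal (a + e')" by (rule mono)
    qed
    then show ?thesis using that by blast
  qed
  have "yk \<longlonglongrightarrow> x" unfolding tendsto_iff
  proof (intro allI impI)
    fix e :: real assume "e > 0"
    then have "eventually (\<lambda>k. dist (yk k) x < e \<and> uk k (yk k) < ereal (a + e)) sequentially"
      using yk by blast
    then show "eventually (\<lambda>k. dist (yk k) x < e) sequentially"
      by (rule eventually_mono) simp
  qed
  moreover have "limsup (\<lambda>k. uk k (yk k)) \<le> u x"
    unfolding Limsup_le_iff a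
  proof (intro allI impI)
    fix w assume "ereal a < w"
    then obtain w' where w1: "ereal a < ereal w'" and w2: "ereal w' < w" using ereal_dense2 by blast
    have "w' - a > 0" using w1 by simp
    then have "eventually (\<lambda>k. dist (yk k) x < w' - a \<and> uk k (yk k) < ereal (a + (w' - a))) sequentially"
      using yk by blast
    then show "eventually (\<lambda>k. uk k (yk k) < w) sequentially"
    proof (rule eventually_mono)
      fix k assume "dist (yk k) x < w' - a \<and> uk k (yk k) < ereal (a + (w' - a))"
      then have "uk k (yk k) < ereal w'" by simp
      then show "uk k (yk k) < w" using w2 by (rule less_trans)
    qed
  qed
  ultimately show ?thesis by blast
qed

theorem proposition5p9:
  fixes \<zeta> :: "real \<Rightarrow> real"
    and uk :: "nat \<Rightarrow> 'a::euclidean_space \<Rightarrow> ereal"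
    and u :: "'a \<Rightarrow> ereal"
  assumes "\<zeta> \<in> M0"
    and "\<And>k. uk k \<in> conv_coe"
    and "u \<in> conv_coe"
    and "(\<lambda>k. delta_H \<zeta> (uk k) u) \<longlonglongrightarrow> 0"
  shows "epi_converges uk u"
  unfolding epi_converges_def
proof (intro allI conjI impI)
  fix x and xk :: "nat \<Rightarrow> 'a"
  assume "xk \<longlonglongrightarrow> x"
  then show "u x \<le> liminf (\<lambda>k. uk k (xk k))" by (rule liminf_part[OF assms])
next
  fix x
  show "\<exists>xk. xk \<longlonglongrightarrow> x \<and> limsup (\<lambda>k. uk k (xk k)) \<le> u x"
    by (rule limsup_part[OF assms])
qed

end
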